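(* With $P$, $\widehat P$, $R_m$, $\Gamma$, $\alpha_\sigma$, $\widehat\alpha_\sigma$ and $\Psi(P,\widehat P)$ as in the context, for every conditional plan $\sigma\in\Gamma$ and every $s\in S$, $$|\alpha_\sigma(s)-\widehat\alpha_\sigma(s)|\le \frac{2\gamma R_m}{(1-\gamma)^2}\,\Psi(P,\widehat P).$$
   Context: $P=\langle S,A,O,T,Z,R,b_0,\gamma\rangle$ is a POMDP with bounded $S\subset\mathbb R^n$, $A\subset\mathbb R^d$, $O\subset\mathbb R^l$, conditional densities $T(s,a,s')=p(s'\mid s,a)$, $Z(s',a,o)=p(o\mid s',a)$, bounded reward $R$, discount $\gamma\in(0,1)$; $\widehat P=\langle S,A,O,\widehat T,\widehat Z,R,b_0,\gamma\rangle$ differs only in transition and observation densities. $R_m=\max\{|\min_{s,a}R(s,a)|,\max_{s,a}R(s,a)\}$. $D_{TV}(\mu,\nu)=\sup_E|\mu(E)-\nu(E)|$. SNM: $\Psi(P,\widehat P)=\sup_{s,a}D_{TV}(T(s,a,\cdot),\widehat T(s,a,\cdot))+\sup_{s,a}D_{TV}(Z(s,a,\cdot),\widehat Z(s,a,\cdot))$. A conditional plan $\sigma=\langle a,\nu\rangle\in\Gamma$ consists of an action $a\in A$ and an observation strategy $\nu:O\to\Gamma$. Its $\alpha$-function is $\alpha_\sigma(s)=R(s,a)+\gamma\int_S\int_O T(s,a,s')Z(s',a,o)\alpha_{\nu(o)}(s')\,do\,ds'$, and $\widehat\alpha_\sigma$ is defined identically with $\widehat T,\widehat Z$. *)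

theory Defs
  imports "HOL-Analysis.Analysis"
begin

definition dtv :: "'x::euclidean_space set \<Rightarrow> ('x \<Rightarrow> real) \<Rightarrow> ('x \<Rightarrow> real) \<Rightarrow> real" where
  "dtv X f g = (SUP E \<in> {E. E \<in> sets lborel \<and> E \<subseteq> X}.
      \<bar>(LINT x:E|lborel. f x) - (LINT x:E|lborel. g x)\<bar>)"

definition Rmax :: "'s set \<Rightarrow> 'a set \<Rightarrow> ('s \<Rightarrow> 'a \<Rightarrow> real) \<Rightarrow> real" where
  "Rmax S A R = max \<bar>INF p \<in> S \<times> A. R (fst p) (snd p)\<bar> (SUP p \<in> S \<times> A. R (fst p) (snd p))"

definition SNM :: "'s::euclidean_space set \<Rightarrow> 'a set \<Rightarrow> 'o::euclidean_space set
   \<Rightarrow> ('s \<Rightarrow> 'a \<Rightarrow> 's \<Rightarrow> real) \<Rightarrow> ('s \<Rightarrow> 'a \<Rightarrow> 'o \<Rightarrow> real)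
   \<Rightarrow> ('s \<Rightarrow> 'a \<Rightarrow> 's \<Rightarrow> real) \<Rightarrow> ('s \<Rightarrow> 'a \<Rightarrow> 'o \<Rightarrow> real) \<Rightarrow> real" where
  "SNM S A Ob T Z T' Z' =
     (SUP p \<in> S \<times> A. dtv S (T (fst p) (snd p)) (T' (fst p) (snd p)))
   + (SUP p \<in> S \<times> A. dtv Ob (Z (fst p) (snd p)) (Z' (fst p) (snd p)))"

definition cond_densities :: "'s::euclidean_space set \<Rightarrow> 'a set \<Rightarrow> 'o::euclidean_space set
   \<Rightarrow> ('s \<Rightarrow> 'a \<Rightarrow> 's \<Rightarrow> real) \<Rightarrow> ('s \<Rightarrow> 'a \<Rightarrow> 'o \<Rightarrow> real) \<Rightarrow> bool" where
  "cond_densities S A Ob T Z \<longleftrightarrow>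
     (\<forall>s\<in>S. \<forall>a\<in>A. T s a \<in> borel_measurable lborel \<and> (\<forall>s'. T s a s' \<ge> 0)
        \<and> set_integrable lborel S (T s a) \<and> (LINT s':S|lborel. T s a s') = 1) \<and>
     (\<forall>a\<in>A. (\<lambda>(s', y). Z s' a y) \<in> borel_measurable (lborel \<Otimes>\<^sub>M lborel)) \<and>
     (\<forall>s'\<in>S. \<forall>a\<in>A. (\<forall>y. Z s' a y \<ge> 0)
        \<and> set_integrable lborel Ob (Z s' a) \<and> (LINT y:Ob|lborel. Z s' a y) = 1)"

text \<open>alpha is the (bounded, measurable) alpha-function family of the conditional plans,
  where a plan sigma has action act sigma and observation strategy nxt sigma.\<close>
definition is_alpha :: "'s::euclidean_space set \<Rightarrow> 'o::euclidean_space set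
   \<Rightarrow> ('s \<Rightarrow> 'a \<Rightarrow> 's \<Rightarrow> real) \<Rightarrow> ('s \<Rightarrow> 'a \<Rightarrow> 'o \<Rightarrow> real) \<Rightarrow> ('s \<Rightarrow> 'a \<Rightarrow> real) \<Rightarrow> real
   \<Rightarrow> ('p \<Rightarrow> 'a) \<Rightarrow> ('p \<Rightarrow> 'o \<Rightarrow> 'p) \<Rightarrow> ('p \<Rightarrow> 's \<Rightarrow> real) \<Rightarrow> bool" where
  "is_alpha S Ob T Z R \<gamma> act nxt \<alpha> \<longleftrightarrow>
     (\<exists>B. \<forall>\<sigma>. \<forall>s\<in>S. \<bar>\<alpha> \<sigma> s\<bar> \<le> B) \<and>
     (\<forall>\<sigma>. (\<lambda>(s', y). indicator (S \<times> Ob) (s', y) * \<alpha> (nxt \<sigma> y) s')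
             \<in> borel_measurable (lborel \<Otimes>\<^sub>M lborel)) \<and>
     (\<forall>\<sigma>. \<forall>s\<in>S. \<alpha> \<sigma> s = R s (act \<sigma>) + \<gamma> *
        (LINT s':S|lborel. (LINT y:Ob|lborel. T s (act \<sigma>) s' * Z s' (act \<sigma>) y * \<alpha> (nxt \<sigma> y) s')))"

end

theory Submission
  imports Defs
begin

lemma bnd_int:
  fixes X :: "'x::euclidean_space set" and p f :: "'x \<Rightarrow> real"
  assumes X: "X \<in> sets lborel" and p: "p \<in> borel_measurable lborel" and p0: "\<And>x. x \<in> X \<Longrightarrow> p x \<ge> 0"
    and pi: "set_integrable lborel X p" and f: "set_borel_measurable lborel X f"
    and fK: "\<And>x. x \<in> X \<Longrightarrow> \<bar>f x\<bar> \<le> K"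
  shows "set_integrable lborel X (\<lambda>x. p x * f x)"
    and "\<bar>LINT x:X|lborel. p x * f x\<bar> \<le> K * (LINT x:X|lborel. p x)"
proof -
  have e1: "(\<lambda>x. indicator X x *\<^sub>R (p x * f x)) = (\<lambda>x. p x * (indicator X x *\<^sub>R f x))"
    by (simp add: mult.left_commute)
  have m: "set_borel_measurable lborel X (\<lambda>x. p x * f x)"
    unfolding set_borel_measurable_def e1
    using p f[unfolded set_borel_measurable_def] by (rule borel_measurable_times)
  have ki: "set_integrable lborel X (\<lambda>x. K * p x)" using pi by (rule set_integrable_mult_right)
  show si: "set_integrable lborel X (\<lambda>x. p x * f x)"
  proof (rule set_integrable_bound[OF ki m], rule AE_I2, rule impI)
    fix x assume x: "x \<in> X"
    have "norm (p x * f x) = p x * \<bar>f x\<bar>" using p0[OF x] by (simp add: abs_mult)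
    also have "\<dots> \<le> p x * K" using p0[OF x] fK[OF x] by (rule mult_left_mono[rotated])
    also have "\<dots> \<le> norm (K * p x)" by (simp add: mult.commute)
    finally show "norm (p x * f x) \<le> norm (K * p x)" .
  qed
  have ai: "set_integrable lborel X (\<lambda>x. \<bar>p x * f x\<bar>)"
  proof -
    have "integrable lborel (\<lambda>x. \<bar>indicator X x *\<^sub>R (p x * f x)\<bar>)"
      using si unfolding set_integrable_def by (rule integrable_abs)
    moreover have "(\<lambda>x. \<bar>indicator X x *\<^sub>R (p x * f x)\<bar>) = (\<lambda>x. indicator X x *\<^sub>R \<bar>p x * f x\<bar>)"
      by (auto simp: indicator_def)
    ultimately show ?thesis unfolding set_integrable_def by simp
  qed
  have "\<bar>LINT x:X|lborel. p x * f x\<bar> \<le> (LINT x:X|lborel. \<bar>p x * f x\<bar>)"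
  proof -
    have "\<bar>LINT x:X|lborel. p x * f x\<bar> \<le> (\<integral>x. \<bar>indicator X x *\<^sub>R (p x * f x)\<bar> \<partial>lborel)"
      unfolding set_lebesgue_integral_def by (rule integral_abs_bound)
    also have "(\<lambda>x. \<bar>indicator X x *\<^sub>R (p x * f x)\<bar>) = (\<lambda>x. indicator X x *\<^sub>R \<bar>p x * f x\<bar>)"
      by (auto simp: indicator_def)
    finally show ?thesis unfolding set_lebesgue_integral_def .
  qed
  also have "\<dots> \<le> (LINT x:X|lborel. K * p x)"
  proof (rule set_integral_mono[OF ai ki])
    fix x assume x: "x \<in> X"
    have "\<bar>p x * f x\<bar> = p x * \<bar>f x\<bar>" using p0[OF x] by (simp add: abs_mult)
    also have "\<dots> \<le> p x * K" using p0[OF x] fK[OF x] by (rule mult_left_mono[rotated])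
    finally show "\<bar>p x * f x\<bar> \<le> K * p x" by (simp add: mult.commute)
  qed
  also have "\<dots> = K * (LINT x:X|lborel. p x)" by (rule set_integral_mult_right)
  finally show "\<bar>LINT x:X|lborel. p x * f x\<bar> \<le> K * (LINT x:X|lborel. p x)" .
qed

lemma dtv_bdd:
  fixes X :: "'x::euclidean_space set" and p q :: "'x \<Rightarrow> real"
  assumes X: "X \<in> sets lborel" and pi: "set_integrable lborel X p" and qi: "set_integrable lborel X q"
  shows "bdd_above ((\<lambda>E. \<bar>(LINT x:E|lborel. p x) - (LINT x:E|lborel. q x)\<bar>) ` {E. E \<in> sets lborel \<and> E \<subseteq> X})"
    and "\<And>E. E \<in> sets lborel \<Longrightarrow> E \<subseteq> X \<Longrightarrow> \<bar>(LINT x:E|lborel. p x) - (LINT x:E|lborel. q x)\<bar>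
          \<le> (LINT x:X|lborel. \<bar>p x\<bar>) + (LINT x:X|lborel. \<bar>q x\<bar>)"
proof -
  have one: "\<bar>LINT x:E|lborel. r x\<bar> \<le> (LINT x:X|lborel. \<bar>r x\<bar>)"
    if E: "E \<in> sets lborel" "E \<subseteq> X" and ri: "set_integrable lborel X r" for E and r :: "'x \<Rightarrow> real"
  proof -
    have rE: "set_integrable lborel E r" using set_integrable_subset[OF ri E] .
    have "\<bar>LINT x:E|lborel. r x\<bar> \<le> (LINT x:E|lborel. \<bar>r x\<bar>)"
      using rE unfolding set_integrable_def set_lebesgue_integral_def
      by (metis (no_types, lifting) abs_mult ext integral_abs_bound abs_indicator real_scaleR_def)
    also have "\<dots> \<le> (LINT x:X|lborel. \<bar>r x\<bar>)"
      unfolding set_lebesgue_integral_def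
      apply (rule integral_mono)
      subgoal using integrable_abs[OF rE[unfolded set_integrable_def]] by (simp add: abs_mult)
      subgoal using integrable_abs[OF ri[unfolded set_integrable_def]] by (simp add: abs_mult)
      using E by (auto split: split_indicator)
    finally show ?thesis .
  qed
  show b: "\<And>E. E \<in> sets lborel \<Longrightarrow> E \<subseteq> X \<Longrightarrow> \<bar>(LINT x:E|lborel. p x) - (LINT x:E|lborel. q x)\<bar>
          \<le> (LINT x:X|lborel. \<bar>p x\<bar>) + (LINT x:X|lborel. \<bar>q x\<bar>)"
    using one[OF _ _ pi] one[OF _ _ qi] by (smt (verit))
  show "bdd_above ((\<lambda>E. \<bar>(LINT x:E|lborel. p x) - (LINT x:E|lborel. q x)\<bar>) ` {E. E \<in> sets lborel \<and> E \<subseteq> X})"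
    unfolding bdd_above_def using b by blast
qed

lemma dtv_ge:
  fixes X :: "'x::euclidean_space set" and p q :: "'x \<Rightarrow> real"
  assumes X: "X \<in> sets lborel" and pi: "set_integrable lborel X p" and qi: "set_integrable lborel X q"
    and E: "E \<in> sets lborel" "E \<subseteq> X"
  shows "\<bar>(LINT x:E|lborel. p x) - (LINT x:E|lborel. q x)\<bar> \<le> dtv X p q"
  unfolding dtv_def
  by (rule cSUP_upper[OF _ dtv_bdd(1)[OF X pi qi]]) (use E in auto)

lemma dtv_nonneg:
  fixes X :: "'x::euclidean_space set" and p q :: "'x \<Rightarrow> real"
  assumes X: "X \<in> sets lborel" and pi: "set_integrable lborel X p" and qi: "set_integrable lborel X q"
  shows "0 \<le> dtv X p q"
  using dtv_ge[OF X pi qi, of "{}"] by auto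

lemma dtv_le:
  fixes X :: "'x::euclidean_space set" and p q :: "'x \<Rightarrow> real"
  assumes X: "X \<in> sets lborel" and pi: "set_integrable lborel X p" and qi: "set_integrable lborel X q"
  shows "dtv X p q \<le> (LINT x:X|lborel. \<bar>p x\<bar>) + (LINT x:X|lborel. \<bar>q x\<bar>)"
  unfolding dtv_def
  by (rule cSUP_least) (auto intro: dtv_bdd(2)[OF X pi qi])


lemma tv_bound:
  fixes X :: "'x::euclidean_space set" and p q f :: "'x \<Rightarrow> real"
  assumes X: "X \<in> sets lborel" and p: "p \<in> borel_measurable lborel" and q: "q \<in> borel_measurable lborel"
    and pi: "set_integrable lborel X p" and qi: "set_integrable lborel X q"
    and f: "set_borel_measurable lborel X f" and K: "0 \<le> K"
    and fK: "\<And>x. x \<in> X \<Longrightarrow> \<bar>f x\<bar> \<le> K"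
  shows "\<bar>LINT x:X|lborel. (p x - q x) * f x\<bar> \<le> 2 * K * dtv X p q"
proof -
  define E where "E = X \<inter> {x \<in> space lborel. q x \<le> p x}"
  define F where "F = X - E"
  have Em: "E \<in> sets lborel" unfolding E_def using X p q by measurable
  have Fm: "F \<in> sets lborel" unfolding F_def using X Em by auto
  have EX: "E \<subseteq> X" "F \<subseteq> X" unfolding E_def F_def by auto
  have XEF: "X = E \<union> F" "E \<inter> F = {}" unfolding F_def using EX by auto
  have dm: "(\<lambda>x. p x - q x) \<in> borel_measurable lborel" "(\<lambda>x. - (p x - q x)) \<in> borel_measurable lborel"
    using p q by auto
  have di: "set_integrable lborel X (\<lambda>x. p x - q x)" using pi qi by auto
  have diE: "set_integrable lborel E (\<lambda>x. p x - q x)" using set_integrable_subset[OF di Em EX(1)] .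
  have diF: "set_integrable lborel F (\<lambda>x. - (p x - q x))"
  proof -
    have "set_integrable lborel F (\<lambda>x. (-1) * (p x - q x))"
      using set_integrable_subset[OF di Fm EX(2)] by (rule set_integrable_mult_right)
    then show ?thesis by simp
  qed
  have fE: "set_borel_measurable lborel E f" using set_borel_measurable_subset[OF f Em EX(1)] .
  have fF: "set_borel_measurable lborel F (\<lambda>x. - f x)"
    using set_borel_measurable_subset[OF f Fm EX(2)] unfolding set_borel_measurable_def by simp
  have E0: "\<And>x. x \<in> E \<Longrightarrow> 0 \<le> p x - q x" unfolding E_def by auto
  have fKE: "\<And>x. x \<in> E \<Longrightarrow> \<bar>f x\<bar> \<le> K" using fK EX by auto
  have F0: "\<And>x. x \<in> F \<Longrightarrow> 0 \<le> - (p x - q x)" unfolding F_def E_def by auto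
  have fKF: "\<And>x. x \<in> F \<Longrightarrow> \<bar>- f x\<bar> \<le> K" using fK EX by auto
  note EE = bnd_int[OF Em dm(1) E0 diE fE fKE]
  note FF = bnd_int[OF Fm dm(2) F0 diF fF fKF]
  have eq: "(\<lambda>x. - (p x - q x) * - f x) = (\<lambda>x. (p x - q x) * f x)" by (simp add: algebra_simps)
  have E1: "set_integrable lborel E (\<lambda>x. (p x - q x) * f x)" using EE(1) .
  have E2: "\<bar>LINT x:E|lborel. (p x - q x) * f x\<bar> \<le> K * (LINT x:E|lborel. p x - q x)" using EE(2) .
  have F1': "set_integrable lborel F (\<lambda>x. (p x - q x) * f x)" using FF(1) unfolding eq .
  have F2': "\<bar>LINT x:F|lborel. (p x - q x) * f x\<bar> \<le> K * (LINT x:F|lborel. - (p x - q x))"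
    using FF(2) unfolding eq .
  have pE: "set_integrable lborel E p" "set_integrable lborel E q"
    using set_integrable_subset[OF pi Em EX(1)] set_integrable_subset[OF qi Em EX(1)] by auto
  have pF: "set_integrable lborel F p" "set_integrable lborel F q"
    using set_integrable_subset[OF pi Fm EX(2)] set_integrable_subset[OF qi Fm EX(2)] by auto
  have dE: "(LINT x:E|lborel. p x - q x) \<le> dtv X p q"
    using dtv_ge[OF X pi qi Em EX(1)] set_integral_diff(2)[OF pE] by simp
  have "(LINT x:F|lborel. - (p x - q x)) = (LINT x:F|lborel. q x) - (LINT x:F|lborel. p x)"
    using set_integral_diff(2)[OF pF(2,1)] by simp
  then have dF: "(LINT x:F|lborel. - (p x - q x)) \<le> dtv X p q"
    using dtv_ge[OF X pi qi Fm EX(2)] by simp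
  have "(LINT x:X|lborel. (p x - q x) * f x) = (LINT x:E|lborel. (p x - q x) * f x) + (LINT x:F|lborel. (p x - q x) * f x)"
    using set_integral_Un[OF XEF(2) E1 F1'] XEF(1) by simp
  then show ?thesis
    using E2 F2' mult_left_mono[OF dE K] mult_left_mono[OF dF K] by linarith
qed

lemma sec_meas:
  fixes \<phi> :: "'s::euclidean_space \<Rightarrow> 'o::euclidean_space \<Rightarrow> real"
  assumes F: "(\<lambda>(s', y). indicator (S \<times> Ob) (s', y) * \<phi> s' y) \<in> borel_measurable (lborel \<Otimes>\<^sub>M lborel)"
    and s: "s' \<in> S"
  shows "set_borel_measurable lborel Ob (\<phi> s')"
proof -
  have "(\<lambda>y. (\<lambda>(s', y). indicator (S \<times> Ob) (s', y) * \<phi> s' y) (s', y)) \<in> borel_measurable lborel"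
    by (rule measurable_Pair2[OF F]) simp
  moreover have "(\<lambda>y. (\<lambda>(s', y). indicator (S \<times> Ob) (s', y) * \<phi> s' y) (s', y)) = (\<lambda>y. indicator Ob y *\<^sub>R \<phi> s' y)"
    using s by (auto simp: indicator_def)
  ultimately show ?thesis unfolding set_borel_measurable_def by simp
qed

lemma zsec:
  fixes W :: "'s::euclidean_space \<Rightarrow> 'o::euclidean_space \<Rightarrow> real"
  assumes "(\<lambda>(s', y). W s' y) \<in> borel_measurable (lborel \<Otimes>\<^sub>M lborel)"
  shows "W s' \<in> borel_measurable lborel"
proof -
  have "(\<lambda>y. (\<lambda>(s', y). W s' y) (s', y)) \<in> borel_measurable lborel"
    by (rule measurable_Pair2[OF assms]) simp
  then show ?thesis by simp
qed

lemma int_meas: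
  fixes \<phi> W :: "'s::euclidean_space \<Rightarrow> 'o::euclidean_space \<Rightarrow> real"
  assumes F: "(\<lambda>(s', y). indicator (S \<times> Ob) (s', y) * \<phi> s' y) \<in> borel_measurable (lborel \<Otimes>\<^sub>M lborel)"
    and Zm: "(\<lambda>(s', y). W s' y) \<in> borel_measurable (lborel \<Otimes>\<^sub>M lborel)"
  shows "set_borel_measurable lborel S (\<lambda>s'. LINT y:Ob|lborel. W s' y * \<phi> s' y)"
proof -
  have pm: "(\<lambda>(s', y). W s' y * (indicator (S \<times> Ob) (s', y) * \<phi> s' y)) \<in> borel_measurable (lborel \<Otimes>\<^sub>M lborel)"
  proof -
    have "(\<lambda>x. (\<lambda>(s', y). W s' y) x * (\<lambda>(s', y). indicator (S \<times> Ob) (s', y) * \<phi> s' y) x) \<in> borel_measurable (lborel \<Otimes>\<^sub>M lborel)"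
      using Zm F by (rule borel_measurable_times)
    moreover have "(\<lambda>x. (\<lambda>(s', y). W s' y) x * (\<lambda>(s', y). indicator (S \<times> Ob) (s', y) * \<phi> s' y) x)
       = (\<lambda>(s', y). W s' y * (indicator (S \<times> Ob) (s', y) * \<phi> s' y))"
      by (auto simp: case_prod_beta)
    ultimately show ?thesis by simp
  qed
  have "(\<lambda>s'. \<integral>y. W s' y * (indicator (S \<times> Ob) (s', y) * \<phi> s' y) \<partial>lborel) \<in> borel_measurable lborel"
    using pm by (rule lborel.borel_measurable_lebesgue_integral)
  moreover have "(\<lambda>s'. \<integral>y. W s' y * (indicator (S \<times> Ob) (s', y) * \<phi> s' y) \<partial>lborel)
      = (\<lambda>s'. indicator S s' *\<^sub>R (LINT y:Ob|lborel. W s' y * \<phi> s' y))"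
  proof
    fix s'
    show "(\<integral>y. W s' y * (indicator (S \<times> Ob) (s', y) * \<phi> s' y) \<partial>lborel)
      = indicator S s' *\<^sub>R (LINT y:Ob|lborel. W s' y * \<phi> s' y)"
      unfolding set_lebesgue_integral_def
      by (cases "s' \<in> S") (auto simp: indicator_times intro!: Bochner_Integration.integral_cong split: split_indicator)
  qed
  ultimately show ?thesis unfolding set_borel_measurable_def by simp
qed

lemma dens_abs:
  fixes X :: "'x::euclidean_space set" and p :: "'x \<Rightarrow> real"
  assumes "\<And>x. p x \<ge> 0" "(LINT x:X|lborel. p x) = 1"
  shows "(LINT x:X|lborel. \<bar>p x\<bar>) = 1"
  using assms by simp

lemma sbm_diff:
  fixes f g :: "'x \<Rightarrow> real"
  assumes "set_borel_measurable M X f" "set_borel_measurable M X g"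
  shows "set_borel_measurable M X (\<lambda>x. f x - g x)"
proof -
  have "(\<lambda>x. indicator X x *\<^sub>R f x - indicator X x *\<^sub>R g x) \<in> borel_measurable M"
    using assms unfolding set_borel_measurable_def by (rule borel_measurable_diff)
  moreover have "(\<lambda>x. indicator X x *\<^sub>R f x - indicator X x *\<^sub>R g x) = (\<lambda>x. indicator X x *\<^sub>R (f x - g x))"
    by (simp add: right_diff_distrib)
  ultimately show ?thesis unfolding set_borel_measurable_def by simp
qed

theorem lemma1:
  fixes S :: "'s::euclidean_space set" and A :: "'a::euclidean_space set"
    and Ob :: "'o::euclidean_space set"
    and T T' :: "'s \<Rightarrow> 'a \<Rightarrow> 's \<Rightarrow> real" and Z Z' :: "'s \<Rightarrow> 'a \<Rightarrow> 'o \<Rightarrow> real"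
    and R :: "'s \<Rightarrow> 'a \<Rightarrow> real" and \<gamma> :: real
    and act :: "'p \<Rightarrow> 'a" and nxt :: "'p \<Rightarrow> 'o \<Rightarrow> 'p"
    and \<alpha> \<alpha>' :: "'p \<Rightarrow> 's \<Rightarrow> real"
  assumes "bounded S" "S \<in> sets lborel" "bounded A" "bounded Ob" "Ob \<in> sets lborel"
    and "cond_densities S A Ob T Z" and "cond_densities S A Ob T' Z'"
    and "bounded ((\<lambda>p. R (fst p) (snd p)) ` (S \<times> A))"
    and "0 < \<gamma>" "\<gamma> < 1"
    and "\<And>\<sigma>. act \<sigma> \<in> A"
    and "is_alpha S Ob T Z R \<gamma> act nxt \<alpha>"
    and "is_alpha S Ob T' Z' R \<gamma> act nxt \<alpha>'"
    and "s \<in> S"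
  shows "\<bar>\<alpha> \<sigma> s - \<alpha>' \<sigma> s\<bar> \<le> 2 * \<gamma> * Rmax S A R / (1 - \<gamma>)^2 * SNM S A Ob T Z T' Z'"
proof -
  have Sm: "S \<in> sets lborel" and Obm: "Ob \<in> sets lborel" using assms(2,5) .
  have actA: "\<And>\<sigma>. act \<sigma> \<in> A" by (rule assms(11))
  have g0: "0 < \<gamma>" "\<gamma> < 1" using assms(9,10) .
  from assms(6) have
      Tm: "\<And>s a. s \<in> S \<Longrightarrow> a \<in> A \<Longrightarrow> T s a \<in> borel_measurable lborel"
    and T0: "\<And>s a s'. s \<in> S \<Longrightarrow> a \<in> A \<Longrightarrow> 0 \<le> T s a s'"
    and Ti: "\<And>s a. s \<in> S \<Longrightarrow> a \<in> A \<Longrightarrow> set_integrable lborel S (T s a)"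
    and T1: "\<And>s a. s \<in> S \<Longrightarrow> a \<in> A \<Longrightarrow> (LINT s':S|lborel. T s a s') = 1"
    and Zj: "\<And>a. a \<in> A \<Longrightarrow> (\<lambda>(s', y). Z s' a y) \<in> borel_measurable (lborel \<Otimes>\<^sub>M lborel)"
    and Z0: "\<And>s' a y. s' \<in> S \<Longrightarrow> a \<in> A \<Longrightarrow> 0 \<le> Z s' a y"
    and Zi: "\<And>s' a. s' \<in> S \<Longrightarrow> a \<in> A \<Longrightarrow> set_integrable lborel Ob (Z s' a)"
    and Z1: "\<And>s' a. s' \<in> S \<Longrightarrow> a \<in> A \<Longrightarrow> (LINT y:Ob|lborel. Z s' a y) = 1"
    unfolding cond_densities_def by blast+
  from assms(7) have
      T'm: "\<And>s a. s \<in> S \<Longrightarrow> a \<in> A \<Longrightarrow> T' s a \<in> borel_measurable lborel"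
    and T'0: "\<And>s a s'. s \<in> S \<Longrightarrow> a \<in> A \<Longrightarrow> 0 \<le> T' s a s'"
    and T'i: "\<And>s a. s \<in> S \<Longrightarrow> a \<in> A \<Longrightarrow> set_integrable lborel S (T' s a)"
    and T'1: "\<And>s a. s \<in> S \<Longrightarrow> a \<in> A \<Longrightarrow> (LINT s':S|lborel. T' s a s') = 1"
    and Z'j: "\<And>a. a \<in> A \<Longrightarrow> (\<lambda>(s', y). Z' s' a y) \<in> borel_measurable (lborel \<Otimes>\<^sub>M lborel)"
    and Z'0: "\<And>s' a y. s' \<in> S \<Longrightarrow> a \<in> A \<Longrightarrow> 0 \<le> Z' s' a y"
    and Z'i: "\<And>s' a. s' \<in> S \<Longrightarrow> a \<in> A \<Longrightarrow> set_integrable lborel Ob (Z' s' a)"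
    and Z'1: "\<And>s' a. s' \<in> S \<Longrightarrow> a \<in> A \<Longrightarrow> (LINT y:Ob|lborel. Z' s' a y) = 1"
    unfolding cond_densities_def by blast+
  have Zm: "\<And>s' a. a \<in> A \<Longrightarrow> Z s' a \<in> borel_measurable lborel"
    using zsec[OF Zj] by blast
  have Z'm: "\<And>s' a. a \<in> A \<Longrightarrow> Z' s' a \<in> borel_measurable lborel"
    using zsec[OF Z'j] by blast
  from assms(12) obtain B where B: "\<And>\<sigma> s. s \<in> S \<Longrightarrow> \<bar>\<alpha> \<sigma> s\<bar> \<le> B"
    and am: "\<And>\<sigma>. (\<lambda>(s', y). indicator (S \<times> Ob) (s', y) * \<alpha> (nxt \<sigma> y) s') \<in> borel_measurable (lborel \<Otimes>\<^sub>M lborel)"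
    and aeq: "\<And>\<sigma> s. s \<in> S \<Longrightarrow> \<alpha> \<sigma> s = R s (act \<sigma>) + \<gamma> *
        (LINT s':S|lborel. (LINT y:Ob|lborel. T s (act \<sigma>) s' * Z s' (act \<sigma>) y * \<alpha> (nxt \<sigma> y) s'))"
    unfolding is_alpha_def by blast
  from assms(13) obtain B' where B': "\<And>\<sigma> s. s \<in> S \<Longrightarrow> \<bar>\<alpha>' \<sigma> s\<bar> \<le> B'"
    and am': "\<And>\<sigma>. (\<lambda>(s', y). indicator (S \<times> Ob) (s', y) * \<alpha>' (nxt \<sigma> y) s') \<in> borel_measurable (lborel \<Otimes>\<^sub>M lborel)"
    and aeq': "\<And>\<sigma> s. s \<in> S \<Longrightarrow> \<alpha>' \<sigma> s = R s (act \<sigma>) + \<gamma> *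
        (LINT s':S|lborel. (LINT y:Ob|lborel. T' s (act \<sigma>) s' * Z' s' (act \<sigma>) y * \<alpha>' (nxt \<sigma> y) s'))"
    unfolding is_alpha_def by blast
  have amd: "(\<lambda>(s', y). indicator (S \<times> Ob) (s', y) * (\<alpha> (nxt \<sigma> y) s' - \<alpha>' (nxt \<sigma> y) s'))
      \<in> borel_measurable (lborel \<Otimes>\<^sub>M lborel)" for \<sigma>
  proof -
    have "(\<lambda>x. (\<lambda>(s', y). indicator (S \<times> Ob) (s', y) * \<alpha> (nxt \<sigma> y) s') x
         - (\<lambda>(s', y). indicator (S \<times> Ob) (s', y) * \<alpha>' (nxt \<sigma> y) s') x) \<in> borel_measurable (lborel \<Otimes>\<^sub>M lborel)"
      using am am' by (rule borel_measurable_diff)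
    moreover have "(\<lambda>x. (\<lambda>(s', y). indicator (S \<times> Ob) (s', y) * \<alpha> (nxt \<sigma> y) s') x
         - (\<lambda>(s', y). indicator (S \<times> Ob) (s', y) * \<alpha>' (nxt \<sigma> y) s') x)
       = (\<lambda>(s', y). indicator (S \<times> Ob) (s', y) * (\<alpha> (nxt \<sigma> y) s' - \<alpha>' (nxt \<sigma> y) s'))"
      by (auto simp: case_prod_beta right_diff_distrib)
    ultimately show ?thesis by simp
  qed

  define M where "M = (SUP x \<in> UNIV \<times> S. \<bar>\<alpha> (fst x) (snd x)\<bar>)"
  have Mbdd: "bdd_above ((\<lambda>x. \<bar>\<alpha> (fst x) (snd x)\<bar>) ` (UNIV \<times> S))"
    using B by (auto intro!: bdd_aboveI2)
  have aM: "\<bar>\<alpha> \<sigma>' s'\<bar> \<le> M" if "s' \<in> S" for \<sigma>' s'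
    unfolding M_def using cSUP_upper[OF _ Mbdd, of "(\<sigma>', s')"] that by auto
  have M0: "0 \<le> M" using order_trans[OF abs_ge_zero aM[OF assms(14), of \<sigma>]] .
  define D where "D = (SUP x \<in> UNIV \<times> S. \<bar>\<alpha> (fst x) (snd x) - \<alpha>' (fst x) (snd x)\<bar>)"
  have Dbdd: "bdd_above ((\<lambda>x. \<bar>\<alpha> (fst x) (snd x) - \<alpha>' (fst x) (snd x)\<bar>) ` (UNIV \<times> S))"
  proof (rule bdd_aboveI2)
    fix x :: "'p \<times> 's" assume "x \<in> UNIV \<times> S"
    then have "snd x \<in> S" by auto
    then show "\<bar>\<alpha> (fst x) (snd x) - \<alpha>' (fst x) (snd x)\<bar> \<le> B + B'"
      using B[OF \<open>snd x \<in> S\<close>, of "fst x"] B'[OF \<open>snd x \<in> S\<close>, of "fst x"] by linarith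
  qed
  have aD: "\<bar>\<alpha> \<sigma>' s' - \<alpha>' \<sigma>' s'\<bar> \<le> D" if "s' \<in> S" for \<sigma>' s'
    unfolding D_def using cSUP_upper[OF _ Dbdd, of "(\<sigma>', s')"] that by auto

  have Rb: "\<bar>R s' a\<bar> \<le> Rmax S A R" if "s' \<in> S" "a \<in> A" for s' a
  proof -
    let ?I = "(\<lambda>p. R (fst p) (snd p)) ` (S \<times> A)"
    have ab: "bdd_above ?I" "bdd_below ?I"
      using assms(8) by (auto intro: bounded_imp_bdd_above bounded_imp_bdd_below)
    have "R s' a \<le> (SUP p \<in> S \<times> A. R (fst p) (snd p))"
      using cSUP_upper[OF _ ab(1), of "(s', a)"] that by auto
    moreover have "(INF p \<in> S \<times> A. R (fst p) (snd p)) \<le> R s' a"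
      using cINF_lower[OF ab(2), of "(s', a)"] that by auto
    ultimately show ?thesis unfolding Rmax_def by linarith
  qed

  define PT where "PT = (SUP p \<in> S \<times> A. dtv S (T (fst p) (snd p)) (T' (fst p) (snd p)))"
  define PZ where "PZ = (SUP p \<in> S \<times> A. dtv Ob (Z (fst p) (snd p)) (Z' (fst p) (snd p)))"
  have SNMeq: "SNM S A Ob T Z T' Z' = PT + PZ" unfolding SNM_def PT_def PZ_def ..
  have dTle: "dtv S (T s' a) (T' s' a) \<le> 2" if "s' \<in> S" "a \<in> A" for s' a
    using dtv_le[OF Sm Ti[OF that] T'i[OF that]] dens_abs[OF T0[OF that] T1[OF that]]
      dens_abs[OF T'0[OF that] T'1[OF that]] by simp
  have dZle: "dtv Ob (Z s' a) (Z' s' a) \<le> 2" if "s' \<in> S" "a \<in> A" for s' a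
    using dtv_le[OF Obm Zi[OF that] Z'i[OF that]] dens_abs[OF Z0[OF that] Z1[OF that]]
      dens_abs[OF Z'0[OF that] Z'1[OF that]] by simp
  have dT: "dtv S (T s' a) (T' s' a) \<le> PT" if "s' \<in> S" "a \<in> A" for s' a
  proof -
    have "bdd_above ((\<lambda>p. dtv S (T (fst p) (snd p)) (T' (fst p) (snd p))) ` (S \<times> A))"
      using dTle by (auto intro!: bdd_aboveI2)
    note bdd = this
    have mem: "(s', a) \<in> S \<times> A" using that by simp
    have "dtv S (T (fst (s', a)) (snd (s', a))) (T' (fst (s', a)) (snd (s', a))) \<le> PT"
      unfolding PT_def by (rule cSUP_upper[OF mem bdd])
    then show ?thesis by simp
  qed
  have dZ: "dtv Ob (Z s' a) (Z' s' a) \<le> PZ" if "s' \<in> S" "a \<in> A" for s' a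
  proof -
    have "bdd_above ((\<lambda>p. dtv Ob (Z (fst p) (snd p)) (Z' (fst p) (snd p))) ` (S \<times> A))"
      using dZle by (auto intro!: bdd_aboveI2)
    note bdd = this
    have mem: "(s', a) \<in> S \<times> A" using that by simp
    have "dtv Ob (Z (fst (s', a)) (snd (s', a))) (Z' (fst (s', a)) (snd (s', a))) \<le> PZ"
      unfolding PZ_def by (rule cSUP_upper[OF mem bdd])
    then show ?thesis by simp
  qed
  have PT0: "0 \<le> PT"
    using dtv_nonneg[OF Sm Ti[OF assms(14) actA[of \<sigma>]] T'i[OF assms(14) actA[of \<sigma>]]] dT[OF assms(14) actA[of \<sigma>]] by linarith
  have PZ0: "0 \<le> PZ"
    using dtv_nonneg[OF Obm Zi[OF assms(14) actA[of \<sigma>]] Z'i[OF assms(14) actA[of \<sigma>]]] dZ[OF assms(14) actA[of \<sigma>]] by linarith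

  define g where "g = (\<lambda>\<sigma> s'. LINT y:Ob|lborel. Z s' (act \<sigma>) y * \<alpha> (nxt \<sigma> y) s')"
  define h where "h = (\<lambda>\<sigma> s'. LINT y:Ob|lborel. Z' s' (act \<sigma>) y * \<alpha> (nxt \<sigma> y) s')"
  define g' where "g' = (\<lambda>\<sigma> s'. LINT y:Ob|lborel. Z' s' (act \<sigma>) y * \<alpha>' (nxt \<sigma> y) s')"
  have gm: "set_borel_measurable lborel S (g \<sigma>')" for \<sigma>'
    unfolding g_def using int_meas[OF am Zj[OF actA]] by simp
  have hm: "set_borel_measurable lborel S (h \<sigma>')" for \<sigma>'
    unfolding h_def using int_meas[OF am Z'j[OF actA]] by simp
  have g'm: "set_borel_measurable lborel S (g' \<sigma>')" for \<sigma>'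
    unfolding g'_def using int_meas[OF am' Z'j[OF actA]] by simp
  have gI: "set_integrable lborel Ob (\<lambda>y. Z s' (act \<sigma>') y * \<alpha> (nxt \<sigma>' y) s')"
     "\<bar>LINT y:Ob|lborel. Z s' (act \<sigma>') y * \<alpha> (nxt \<sigma>' y) s'\<bar> \<le> M * (LINT y:Ob|lborel. Z s' (act \<sigma>') y)"
    if "s' \<in> S" for \<sigma>' s'
    using bnd_int[OF Obm Zm[OF actA[of \<sigma>']] Z0[OF that actA[of \<sigma>']] Zi[OF that actA[of \<sigma>']]
      sec_meas[OF am[of \<sigma>'] that] aM[OF that]] by blast+
  have hI: "set_integrable lborel Ob (\<lambda>y. Z' s' (act \<sigma>') y * \<alpha> (nxt \<sigma>' y) s')"
     "\<bar>LINT y:Ob|lborel. Z' s' (act \<sigma>') y * \<alpha> (nxt \<sigma>' y) s'\<bar> \<le> M * (LINT y:Ob|lborel. Z' s' (act \<sigma>') y)"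
    if "s' \<in> S" for \<sigma>' s'
    using bnd_int[OF Obm Z'm[OF actA[of \<sigma>']] Z'0[OF that actA[of \<sigma>']] Z'i[OF that actA[of \<sigma>']]
      sec_meas[OF am[of \<sigma>'] that] aM[OF that]] by blast+
  have g'I: "set_integrable lborel Ob (\<lambda>y. Z' s' (act \<sigma>') y * \<alpha>' (nxt \<sigma>' y) s')"
     "\<bar>LINT y:Ob|lborel. Z' s' (act \<sigma>') y * \<alpha>' (nxt \<sigma>' y) s'\<bar> \<le> B' * (LINT y:Ob|lborel. Z' s' (act \<sigma>') y)"
    if "s' \<in> S" for \<sigma>' s'
    using bnd_int[OF Obm Z'm[OF actA[of \<sigma>']] Z'0[OF that actA[of \<sigma>']] Z'i[OF that actA[of \<sigma>']]
      sec_meas[OF am'[of \<sigma>'] that] B'[OF that]] by blast+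
  have gb: "\<bar>g \<sigma>' s'\<bar> \<le> M" if "s' \<in> S" for \<sigma>' s'
    using gI(2)[OF that, of \<sigma>'] Z1[OF that actA[of \<sigma>']] unfolding g_def by simp
  have hb: "\<bar>h \<sigma>' s'\<bar> \<le> M" if "s' \<in> S" for \<sigma>' s'
    using hI(2)[OF that, of \<sigma>'] Z'1[OF that actA[of \<sigma>']] unfolding h_def by simp
  have g'b: "\<bar>g' \<sigma>' s'\<bar> \<le> B'" if "s' \<in> S" for \<sigma>' s'
    using g'I(2)[OF that, of \<sigma>'] Z'1[OF that actA[of \<sigma>']] unfolding g'_def by simp

  have eqa: "\<alpha> \<sigma>' s' = R s' (act \<sigma>') + \<gamma> * (LINT x:S|lborel. T s' (act \<sigma>') x * g \<sigma>' x)" if "s' \<in> S" for \<sigma>' s'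
    using aeq[OF that, of \<sigma>'] unfolding g_def by (simp add: mult.assoc)
  have eqa': "\<alpha>' \<sigma>' s' = R s' (act \<sigma>') + \<gamma> * (LINT x:S|lborel. T' s' (act \<sigma>') x * g' \<sigma>' x)" if "s' \<in> S" for \<sigma>' s'
    using aeq'[OF that, of \<sigma>'] unfolding g'_def by (simp add: mult.assoc)

  have "\<bar>\<alpha> \<sigma>' s'\<bar> \<le> Rmax S A R + \<gamma> * M" if "s' \<in> S" for \<sigma>' s'
  proof -
    have "\<bar>LINT x:S|lborel. T s' (act \<sigma>') x * g \<sigma>' x\<bar> \<le> M * (LINT x:S|lborel. T s' (act \<sigma>') x)"
      using bnd_int(2)[OF Sm Tm[OF that actA] T0[OF that actA] Ti[OF that actA] gm gb] .
    then have "\<bar>LINT x:S|lborel. T s' (act \<sigma>') x * g \<sigma>' x\<bar> \<le> M" using T1[OF that actA] by simp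
    then have "\<bar>\<gamma> * (LINT x:S|lborel. T s' (act \<sigma>') x * g \<sigma>' x)\<bar> \<le> \<gamma> * M"
      using g0 by (simp add: abs_mult)
    then show ?thesis using eqa[OF that, of \<sigma>'] Rb[OF that actA[of \<sigma>']] by linarith
  qed
  note Mb = this
  have MR: "M \<le> Rmax S A R + \<gamma> * M"
    unfolding M_def
  proof (rule cSUP_least)
    show "UNIV \<times> S \<noteq> {}" using assms(14) by blast
    fix x :: "'p \<times> 's" assume "x \<in> UNIV \<times> S"
    then have "snd x \<in> S" by auto
    then show "\<bar>\<alpha> (fst x) (snd x)\<bar> \<le> Rmax S A R + \<gamma> * (SUP x \<in> UNIV \<times> S. \<bar>\<alpha> (fst x) (snd x)\<bar>)"
      using Mb unfolding M_def by blast
  qed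

  have diff: "\<bar>\<alpha> \<sigma>' s' - \<alpha>' \<sigma>' s'\<bar> \<le> \<gamma> * (2 * M * (PT + PZ) + D)" if s': "s' \<in> S" for \<sigma>' s'
  proof -
    let ?a = "act \<sigma>'"
    have a: "?a \<in> A" by (rule actA)
    note I1 = bnd_int[OF Sm Tm[OF s' a] T0[OF s' a] Ti[OF s' a] gm gb]
    note I2 = bnd_int[OF Sm T'm[OF s' a] T'0[OF s' a] T'i[OF s' a] gm gb]
    note I3 = bnd_int[OF Sm T'm[OF s' a] T'0[OF s' a] T'i[OF s' a] hm hb]
    note I4 = bnd_int[OF Sm T'm[OF s' a] T'0[OF s' a] T'i[OF s' a] g'm g'b]
    have X1: "(LINT x:S|lborel. T s' ?a x * g \<sigma>' x) - (LINT x:S|lborel. T' s' ?a x * g \<sigma>' x)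
        = (LINT x:S|lborel. (T s' ?a x - T' s' ?a x) * g \<sigma>' x)"
      using set_integral_diff(2)[OF I1(1) I2(1)] by (simp add: left_diff_distrib)
    have B1: "\<bar>LINT x:S|lborel. (T s' ?a x - T' s' ?a x) * g \<sigma>' x\<bar> \<le> 2 * M * PT"
    proof -
      have "\<bar>LINT x:S|lborel. (T s' ?a x - T' s' ?a x) * g \<sigma>' x\<bar> \<le> 2 * M * dtv S (T s' ?a) (T' s' ?a)"
        by (rule tv_bound[OF Sm Tm[OF s' a] T'm[OF s' a] Ti[OF s' a] T'i[OF s' a] gm M0 gb])
      also have "\<dots> \<le> 2 * M * PT" using dT[OF s' a] M0 by (simp add: mult_left_mono)
      finally show ?thesis .
    qed
    have ghb: "\<bar>g \<sigma>' x - h \<sigma>' x\<bar> \<le> 2 * M * PZ" if x: "x \<in> S" for x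
    proof -
      have "g \<sigma>' x - h \<sigma>' x = (LINT y:Ob|lborel. (Z x ?a y - Z' x ?a y) * \<alpha> (nxt \<sigma>' y) x)"
        unfolding g_def h_def using set_integral_diff(2)[OF gI(1)[OF x] hI(1)[OF x]]
        by (simp add: left_diff_distrib)
      also have "\<bar>\<dots>\<bar> \<le> 2 * M * dtv Ob (Z x ?a) (Z' x ?a)"
        by (rule tv_bound[OF Obm Zm[OF a] Z'm[OF a] Zi[OF x a] Z'i[OF x a] sec_meas[OF am x] M0 aM[OF x]])
      also have "\<dots> \<le> 2 * M * PZ" using dZ[OF x a] M0 by (simp add: mult_left_mono)
      finally show ?thesis .
    qed
    have X2: "(LINT x:S|lborel. T' s' ?a x * g \<sigma>' x) - (LINT x:S|lborel. T' s' ?a x * h \<sigma>' x)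
        = (LINT x:S|lborel. T' s' ?a x * (g \<sigma>' x - h \<sigma>' x))"
      using set_integral_diff(2)[OF I2(1) I3(1)] by (simp add: right_diff_distrib)
    have B2: "\<bar>LINT x:S|lborel. T' s' ?a x * (g \<sigma>' x - h \<sigma>' x)\<bar> \<le> 2 * M * PZ"
      using bnd_int(2)[OF Sm T'm[OF s' a] T'0[OF s' a] T'i[OF s' a] sbm_diff[OF gm hm] ghb] T'1[OF s' a] by simp
    have hgb: "\<bar>h \<sigma>' x - g' \<sigma>' x\<bar> \<le> D" if x: "x \<in> S" for x
    proof -
      have "h \<sigma>' x - g' \<sigma>' x = (LINT y:Ob|lborel. Z' x ?a y * (\<alpha> (nxt \<sigma>' y) x - \<alpha>' (nxt \<sigma>' y) x))"
        unfolding h_def g'_def using set_integral_diff(2)[OF hI(1)[OF x] g'I(1)[OF x]]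
        by (simp add: right_diff_distrib)
      also have "\<bar>\<dots>\<bar> \<le> D * (LINT y:Ob|lborel. Z' x ?a y)"
        by (rule bnd_int(2)[OF Obm Z'm[OF a] Z'0[OF x a] Z'i[OF x a] sec_meas[OF amd x] aD[OF x]])
      finally show ?thesis using Z'1[OF x a] by simp
    qed
    have X3: "(LINT x:S|lborel. T' s' ?a x * h \<sigma>' x) - (LINT x:S|lborel. T' s' ?a x * g' \<sigma>' x)
        = (LINT x:S|lborel. T' s' ?a x * (h \<sigma>' x - g' \<sigma>' x))"
      using set_integral_diff(2)[OF I3(1) I4(1)] by (simp add: right_diff_distrib)
    have B3: "\<bar>LINT x:S|lborel. T' s' ?a x * (h \<sigma>' x - g' \<sigma>' x)\<bar> \<le> D"
      using bnd_int(2)[OF Sm T'm[OF s' a] T'0[OF s' a] T'i[OF s' a] sbm_diff[OF hm g'm] hgb] T'1[OF s' a] by simp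
    have "\<alpha> \<sigma>' s' - \<alpha>' \<sigma>' s' = \<gamma> * ((LINT x:S|lborel. T s' ?a x * g \<sigma>' x) - (LINT x:S|lborel. T' s' ?a x * g' \<sigma>' x))"
      using eqa[OF s', of \<sigma>'] eqa'[OF s', of \<sigma>'] by (simp add: right_diff_distrib)
    also have "\<dots> = \<gamma> * ((LINT x:S|lborel. (T s' ?a x - T' s' ?a x) * g \<sigma>' x)
          + (LINT x:S|lborel. T' s' ?a x * (g \<sigma>' x - h \<sigma>' x))
          + (LINT x:S|lborel. T' s' ?a x * (h \<sigma>' x - g' \<sigma>' x)))"
      using X1 X2 X3 by simp
    finally have "\<bar>\<alpha> \<sigma>' s' - \<alpha>' \<sigma>' s'\<bar> = \<gamma> * \<bar>(LINT x:S|lborel. (T s' ?a x - T' s' ?a x) * g \<sigma>' x)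
          + (LINT x:S|lborel. T' s' ?a x * (g \<sigma>' x - h \<sigma>' x))
          + (LINT x:S|lborel. T' s' ?a x * (h \<sigma>' x - g' \<sigma>' x))\<bar>"
      using g0 by (simp add: abs_mult)
    also have "\<dots> \<le> \<gamma> * (2 * M * PT + 2 * M * PZ + D)"
      using B1 B2 B3 g0 by (intro mult_left_mono) linarith+
    finally show ?thesis by (simp add: algebra_simps)
  qed
  have DD: "D \<le> \<gamma> * (2 * M * (PT + PZ) + D)"
    unfolding D_def
  proof (rule cSUP_least)
    show "UNIV \<times> S \<noteq> {}" using assms(14) by blast
    fix x :: "'p \<times> 's" assume "x \<in> UNIV \<times> S"
    then have "snd x \<in> S" by auto
    then show "\<bar>\<alpha> (fst x) (snd x) - \<alpha>' (fst x) (snd x)\<bar> \<le> \<gamma> * (2 * M * (PT + PZ) + (SUP x \<in> UNIV \<times> S. \<bar>\<alpha> (fst x) (snd x) - \<alpha>' (fst x) (snd x)\<bar>))"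
      using diff unfolding D_def by blast
  qed
  have D1: "D \<le> \<gamma> * (2 * M * (PT + PZ)) / (1 - \<gamma>)"
  proof -
    have "D * (1 - \<gamma>) \<le> \<gamma> * (2 * M * (PT + PZ))" using DD by (simp add: algebra_simps)
    then show ?thesis using g0 by (simp add: pos_le_divide_eq)
  qed
  have M1: "M \<le> Rmax S A R / (1 - \<gamma>)"
  proof -
    have "M * (1 - \<gamma>) \<le> Rmax S A R" using MR by (simp add: algebra_simps)
    then show ?thesis using g0 by (simp add: pos_le_divide_eq)
  qed
  have P0: "0 \<le> PT + PZ" using PT0 PZ0 by simp
  have "\<gamma> * (2 * M * (PT + PZ)) / (1 - \<gamma>) \<le> \<gamma> * (2 * (Rmax S A R / (1 - \<gamma>)) * (PT + PZ)) / (1 - \<gamma>)"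
    using g0 P0 M1 by (intro divide_right_mono mult_left_mono mult_right_mono) auto
  also have "\<dots> = 2 * \<gamma> * Rmax S A R / (1 - \<gamma>)^2 * SNM S A Ob T Z T' Z'"
    using g0 unfolding SNMeq by (simp add: power2_eq_square field_simps)
  finally show ?thesis using aD[OF assms(14), of \<sigma>] D1 by linarith
qed

end
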